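(* Let $a$ and $q \geq 1$ be integers with $\gcd(a,q) = 1$. Let $n, k, L$ be positive integers and $N \geq 1$ a real number such that $$L \leq N^n, \qquad q \leq L N^k, \qquad 2^{n+k+1} < N.$$ Let $\mathcal{P}$ be the set of primes in $[N/2, N]$ not dividing $q$. Then $$\sum_{l = 1}^{L} \left| \sum_{q_1 \in \mathcal{P}} \cdots \sum_{q_n \in \mathcal{P}} e\!\left(\frac{l\, q_1 \cdots q_n\, a}{q}\right) \right| \leq C\, 2^{n+k} n^n \max\!\left(L N^{n/2 + k/2},\ \frac{L N^n}{q^{1/2}}\right),$$ where $C>0$ is an absolute constant.
   Context: $e(x) := e^{2\pi i x}$. *)

theory Defs
  imports "HOL-Analysis.Analysis"
begin

definition e :: "real \<Rightarrow> complex" where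
  "e x = exp (2 * of_real pi * \<i> * of_real x)"

end

theory Submission
  imports Defs "HOL-Computational_Algebra.Primes"
begin



lemma e_add_int: "e (x + of_int j) = e x"
proof -
  have "2 * of_real pi * \<i> * of_real (x + of_int j) = 2 * of_real pi * \<i> * of_real x + \<i> * (of_int j * (of_real pi * 2))"
    by (simp add: algebra_simps)
  then show ?thesis unfolding e_def by (simp only: exp_plus_2pin)
qed

lemma e_int: "e (of_int j) = 1"
  using e_add_int[of 0 j] by (simp add: e_def)

lemma e_mult_nat: "e (of_nat m * x) = e x ^ m"
  unfolding e_def by (simp add: exp_of_nat_mult[symmetric] algebra_simps)

lemma e_diff: "e x * cnj (e y) = e (x - y)"
proof -
  have "cnj (e y) = exp (- (2 * of_real pi * \<i> * of_real y))"
    unfolding e_def by (simp add: exp_cnj)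
  then show ?thesis unfolding e_def by (simp add: exp_add[symmetric] algebra_simps)
qed

lemma norm_e: "norm (e x) = 1"
  unfolding e_def by (simp add: norm_exp)

lemma e_eq_1_iff: "e x = 1 \<longleftrightarrow> x \<in> \<int>"
proof -
  have "e x = 1 \<longleftrightarrow> (\<exists>n::int. 2 * pi * x = of_int (2 * n) * pi)"
    unfolding e_def exp_eq_1 by simp
  also have "\<dots> \<longleftrightarrow> (\<exists>n::int. x = of_int n)" by auto
  also have "\<dots> \<longleftrightarrow> x \<in> \<int>" by (auto elim: Ints_cases)
  finally show ?thesis .
qed

lemma geom_e:
  fixes qn :: nat and d :: int
  assumes "qn > 0"
  shows "(\<Sum>m<qn. e (real m * d / qn)) = (if int qn dvd d then of_nat qn else 0)"
proof (cases "int qn dvd d")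
  case True
  then obtain c where c: "d = int qn * c" by auto
  have "e (real m * d / qn) = 1" for m
    using assms c e_int[of "int m * c"] by (simp add: field_simps)
  then show ?thesis using True by simp
next
  case False
  define w where "w = e (d / qn)"
  have w1: "w \<noteq> 1"
  proof
    assume "w = 1"
    then have "real_of_int d / real qn \<in> \<int>" unfolding w_def e_eq_1_iff .
    then obtain c where "real_of_int d / real qn = of_int c" by (auto elim: Ints_cases)
    then have "d = int qn * c" using assms by (simp add: field_simps) (metis of_int_eq_iff of_int_mult of_int_of_nat_eq)
    then show False using False by auto
  qed
  have wq: "w ^ qn = 1"
    unfolding w_def using e_mult_nat[of qn "d / qn"] e_int[of d] assms by simp
  have "(\<Sum>m<qn. e (real m * d / qn)) = (\<Sum>m<qn. w ^ m)"
    unfolding w_def by (intro sum.cong refl) (simp add: e_mult_nat[symmetric])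
  also have "\<dots> = 0" using w1 wq by (simp add: sum_gp_strict)
  finally show ?thesis using False by simp
qed




lemma periodic_block:
  fixes g :: "nat \<Rightarrow> real"
  assumes per: "\<And>m. g (m + qn) = g m"
  shows "(\<Sum>m<c * qn. g m) = real c * (\<Sum>m<qn. g m)"
proof (induction c)
  case 0 then show ?case by simp
next
  case (Suc c)
  have "(\<Sum>m<Suc c * qn. g m) = (\<Sum>m<c * qn. g m) + (\<Sum>m\<in>{c*qn..<c*qn+qn}. g m)"
    by (simp add: sum.atLeastLessThan_concat[symmetric] lessThan_atLeast0 add.commute)
  also have "(\<Sum>m\<in>{c*qn..<c*qn+qn}. g m) = (\<Sum>m<qn. g (m + c*qn))"
    by (simp add: sum.shift_bounds_nat_ivl[of g 0 "c*qn" qn, simplified] lessThan_atLeast0 add.commute)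
  also have "(\<Sum>m<qn. g (m + c*qn)) = (\<Sum>m<qn. g m)"
  proof -
    have "g (m + c*qn) = g m" for m
    proof (induction c)
      case 0 then show ?case by simp
    next
      case (Suc c)
      have "m + Suc c * qn = (m + c*qn) + qn" by simp
      then show ?case using Suc per by metis
    qed
    then show ?thesis by simp
  qed
  finally show ?case using Suc by (simp add: algebra_simps)
qed

lemma periodic_sum_le:
  fixes g :: "nat \<Rightarrow> real"
  assumes per: "\<And>m. g (m + qn) = g m" and nn: "\<And>m. g m \<ge> 0" and q: "qn > 0"
  shows "(\<Sum>m\<in>{1..M}. g m) \<le> real (M div qn + 1) * (\<Sum>m<qn. g m)"
proof -
  have "{1..M} \<subseteq> {..<(M div qn + 1) * qn}"
  proof
    fix m assume "m \<in> {1..M}"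
    then have "m \<le> M" by simp
    moreover have "M < (M div qn + 1) * qn" using q
      by (metis div_mult_mod_eq add_less_cancel_left mod_less_divisor distrib_right mult_1 add.commute mult.commute)
    ultimately show "m \<in> {..<(M div qn + 1) * qn}" by simp
  qed
  then have "(\<Sum>m\<in>{1..M}. g m) \<le> (\<Sum>m<(M div qn + 1) * qn. g m)"
    by (intro sum_mono2) (auto simp: nn)
  also have "\<dots> = real (M div qn + 1) * (\<Sum>m<qn. g m)"
    using periodic_block[of g qn] per by blast
  finally show ?thesis .
qed

lemma card_residue_le:
  fixes qn B c :: nat
  assumes "qn > 0"
  shows "card {v\<in>{1..B}. v mod qn = c} \<le> B div qn + 1"
proof -
  have "inj_on (\<lambda>v. v div qn) {v\<in>{1..B}. v mod qn = c}"
    by (intro inj_onI) (metis (mono_tags, lifting) mem_Collect_eq div_mult_mod_eq)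
  moreover have "(\<lambda>v. v div qn) ` {v\<in>{1..B}. v mod qn = c} \<subseteq> {..B div qn}"
    by (auto intro: div_le_mono)
  ultimately have "card {v\<in>{1..B}. v mod qn = c} \<le> card {..B div qn}"
    by (metis card_image card_mono finite_atMost)
  then show ?thesis by simp
qed

lemma sum_fiber_le:
  fixes g :: "nat \<Rightarrow> real" and f :: "'z \<Rightarrow> nat"
  assumes "finite Z" "finite S" "f ` Z \<subseteq> S" "\<And>m. g m \<ge> 0"
    and fib: "\<And>m. m \<in> S \<Longrightarrow> card {z\<in>Z. f z = m} \<le> F"
  shows "(\<Sum>z\<in>Z. g (f z)) \<le> real F * (\<Sum>m\<in>S. g m)"
proof -
  have "(\<Sum>z\<in>Z. g (f z)) = (\<Sum>m\<in>f ` Z. \<Sum>z\<in>{z\<in>Z. f z = m}. g (f z))"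
    using assms(1) by (rule sum.image_gen)
  also have "\<dots> = (\<Sum>m\<in>f ` Z. real (card {z\<in>Z. f z = m}) * g m)"
    by (intro sum.cong refl) simp
  also have "\<dots> \<le> (\<Sum>m\<in>f ` Z. real F * g m)"
    using assms by (intro sum_mono mult_right_mono) auto
  also have "\<dots> \<le> (\<Sum>m\<in>S. real F * g m)"
    using assms by (intro sum_mono2) auto
  finally show ?thesis by (simp add: sum_distrib_left)
qed

lemma prod_distinct_primes_dvd:
  fixes Q :: "nat set"
  assumes "finite Q" "\<And>p. p \<in> Q \<Longrightarrow> prime p \<and> p dvd v"
  shows "(\<Prod>p\<in>Q. p) dvd v"
  using assms
proof (induction Q rule: finite_induct)
  case empty then show ?case by simp
next
  case (insert a F)
  have "coprime a (\<Prod>p\<in>F. p)"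
  proof (rule prime_imp_coprime)
    show "prime a" using insert by auto
    show "\<not> a dvd (\<Prod>p\<in>F. p)"
    proof
      assume "a dvd (\<Prod>p\<in>F. p)"
      then obtain x where "x \<in> F" "a dvd x" using insert \<open>prime a\<close> by (auto simp: prime_dvd_prod_iff)
      then have "a = x" using insert by (metis insertCI primes_dvd_imp_eq)
      then show False using insert \<open>x \<in> F\<close> by auto
    qed
  qed
  then show ?case using insert by (simp add: divides_mult)
qed

lemma card_dvd_tuples:
  fixes P :: "nat set" and N :: real and v D :: nat
  assumes P: "\<And>p. p \<in> P \<Longrightarrow> prime p \<and> N / 2 \<le> real p"
    and N4: "N \<ge> 4" and v: "v > 0" "real v \<le> N ^ D" and I: "finite I"
  shows "card {t \<in> PiE I (\<lambda>_. P). (\<Prod>i\<in>I. t i) dvd v} \<le> (2 * D) ^ card I"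
proof -
  define Q where "Q = {p\<in>P. p dvd v}"
  have "Q \<subseteq> {..v}" unfolding Q_def using v by (auto dest: dvd_imp_le)
  then have fQ: "finite Q" by (rule finite_subset) simp
  have sub: "{t \<in> PiE I (\<lambda>_. P). (\<Prod>i\<in>I. t i) dvd v} \<subseteq> PiE I (\<lambda>_. Q)"
  proof
    fix t assume t: "t \<in> {t \<in> PiE I (\<lambda>_. P). (\<Prod>i\<in>I. t i) dvd v}"
    then have tP: "t \<in> PiE I (\<lambda>_. P)" and dv: "(\<Prod>i\<in>I. t i) dvd v" by simp_all
    have "t i \<in> Q" if "i \<in> I" for i
    proof -
      have "t i dvd (\<Prod>i\<in>I. t i)" using I that by (rule dvd_prodI)
      then have "t i dvd v" using dv by (rule dvd_trans)
      moreover have "t i \<in> P" using tP that by (rule PiE_mem)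
      ultimately show ?thesis unfolding Q_def by simp
    qed
    moreover have "t \<in> extensional I" using tP by (simp add: PiE_iff)
    ultimately show "t \<in> PiE I (\<lambda>_. Q)" by (simp add: PiE_iff)
  qed
  have cQ: "card Q \<le> 2 * D"
  proof (rule ccontr)
    assume "\<not> card Q \<le> 2 * D"
    then have cq: "card Q \<ge> 2 * D + 1" by simp
    have "(\<Prod>p\<in>Q. p) dvd v" using fQ by (intro prod_distinct_primes_dvd) (auto simp: Q_def P)
    then have "(\<Prod>p\<in>Q. p) \<le> v" using v(1) by (rule dvd_imp_le)
    then have le: "(\<Prod>p\<in>Q. real p) \<le> real v" by (simp only: of_nat_prod[symmetric] of_nat_le_iff)
    have "(N/2) ^ card Q = (\<Prod>p\<in>Q. N/2)" by simp
    also have "\<dots> \<le> (\<Prod>p\<in>Q. real p)"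
      using N4 P by (intro prod_mono) (fastforce simp: Q_def)+
    finally have "(N/2) ^ card Q \<le> real v" using le by linarith
    have "(N/2) ^ (2*D+1) \<le> (N/2) ^ card Q"
      using N4 cq by (intro power_increasing) auto
    moreover have "(N/2)^(2*D+1) = ((N/2)^2)^D * (N/2)" by (simp add: power_mult)
    moreover have "N ^ D * 2 \<le> ((N/2)^2)^D * (N/2)"
    proof (rule mult_mono)
      show "N ^ D \<le> ((N/2)^2)^D"
        using N4 by (intro power_mono) (auto simp: power2_eq_square)
    qed (use N4 in auto)
    moreover have "N ^ D > 0" using N4 by simp
    ultimately show False using v(2) \<open>(N/2) ^ card Q \<le> real v\<close> by linarith
  qed
  have "card {t \<in> PiE I (\<lambda>_. P). (\<Prod>i\<in>I. t i) dvd v} \<le> card (PiE I (\<lambda>_. Q))"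
    using sub I fQ by (intro card_mono finite_PiE) auto
  also have "\<dots> = card Q ^ card I" using I by (simp add: card_PiE)
  also have "\<dots> \<le> (2 * D) ^ card I" using cQ by (intro power_mono) auto
  finally show ?thesis .
qed




definition pmerge :: "'i set \<Rightarrow> ('i \<Rightarrow> 'a) \<Rightarrow> ('i \<Rightarrow> 'a) \<Rightarrow> 'i \<Rightarrow> 'a" where
  "pmerge I y x = (\<lambda>i. if i \<in> I then y i else x i)"

lemma pmerge_bij:
  assumes "I \<inter> J = {}"
  shows "bij_betw (\<lambda>(y, x). pmerge I y x) (PiE I (\<lambda>_. B) \<times> PiE J (\<lambda>_. B)) (PiE (I \<union> J) (\<lambda>_. B))"
proof (rule bij_betwI')
  fix u v assume u: "u \<in> PiE I (\<lambda>_. B) \<times> PiE J (\<lambda>_. B)" and v: "v \<in> PiE I (\<lambda>_. B) \<times> PiE J (\<lambda>_. B)"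
  obtain y x where ux: "u = (y, x)" by (cases u)
  obtain y' x' where vx: "v = (y', x')" by (cases v)
  have y: "y \<in> PiE I (\<lambda>_. B)" and x: "x \<in> PiE J (\<lambda>_. B)" using u ux by auto
  have y': "y' \<in> PiE I (\<lambda>_. B)" and x': "x' \<in> PiE J (\<lambda>_. B)" using v vx by auto
  show "((case u of (y, x) \<Rightarrow> pmerge I y x) = (case v of (y, x) \<Rightarrow> pmerge I y x)) = (u = v)"
  proof
    assume eq: "(case u of (y, x) \<Rightarrow> pmerge I y x) = (case v of (y, x) \<Rightarrow> pmerge I y x)"
    then have m: "\<And>i. pmerge I y x i = pmerge I y' x' i" using ux vx by simp
    have "y = y'"
    proof
      fix i show "y i = y' i"
      proof (cases "i \<in> I")
        case True then show ?thesis using m[of i] by (simp add: pmerge_def)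
      next
        case False then show ?thesis using PiE_arb[OF y False] PiE_arb[OF y' False] by simp
      qed
    qed
    moreover have "x = x'"
    proof
      fix i show "x i = x' i"
      proof (cases "i \<in> J")
        case True then have "i \<notin> I" using assms by blast
        then show ?thesis using m[of i] by (simp add: pmerge_def)
      next
        case False then show ?thesis using PiE_arb[OF x False] PiE_arb[OF x' False] by simp
      qed
    qed
    ultimately show "u = v" using ux vx by simp
  qed simp
next
  fix u assume u: "u \<in> PiE I (\<lambda>_. B) \<times> PiE J (\<lambda>_. B)"
  obtain y x where ux: "u = (y, x)" by (cases u)
  have y: "y \<in> PiE I (\<lambda>_. B)" and x: "x \<in> PiE J (\<lambda>_. B)" using u ux by auto
  have "pmerge I y x \<in> PiE (I \<union> J) (\<lambda>_. B)"
    unfolding PiE_iff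
  proof
    show "\<forall>i\<in>I \<union> J. pmerge I y x i \<in> B"
    proof
      fix i assume i: "i \<in> I \<union> J"
      show "pmerge I y x i \<in> B"
      proof (cases "i \<in> I")
        case True then show ?thesis using PiE_mem[OF y True] by (simp add: pmerge_def)
      next
        case False then have "i \<in> J" using i by blast
        then show ?thesis using PiE_mem[OF x \<open>i \<in> J\<close>] False by (simp add: pmerge_def)
      qed
    qed
    show "pmerge I y x \<in> extensional (I \<union> J)"
      unfolding extensional_def
    proof
      show "\<forall>i. i \<notin> I \<union> J \<longrightarrow> pmerge I y x i = undefined"
      proof (intro allI impI)
        fix i assume "i \<notin> I \<union> J"
        then have "i \<notin> I" "i \<notin> J" by auto
        then show "pmerge I y x i = undefined" using PiE_arb[OF x \<open>i \<notin> J\<close>] by (simp add: pmerge_def)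
      qed
    qed
  qed
  then show "(case u of (y, x) \<Rightarrow> pmerge I y x) \<in> PiE (I \<union> J) (\<lambda>_. B)" using ux by simp
next
  fix f assume f: "f \<in> PiE (I \<union> J) (\<lambda>_. B)"
  have "f = pmerge I (restrict f I) (restrict f J)"
  proof
    fix i show "f i = pmerge I (restrict f I) (restrict f J) i"
    proof (cases "i \<in> I \<union> J")
      case True then show ?thesis by (auto simp: pmerge_def)
    next
      case False then show ?thesis using PiE_arb[OF f False] by (simp add: pmerge_def)
    qed
  qed
  moreover have "(restrict f I, restrict f J) \<in> PiE I (\<lambda>_. B) \<times> PiE J (\<lambda>_. B)"
    using PiE_mem[OF f] by (auto simp: restrict_PiE_iff)
  ultimately show "\<exists>u\<in>PiE I (\<lambda>_. B) \<times> PiE J (\<lambda>_. B). f = (case u of (y, x) \<Rightarrow> pmerge I y x)"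
    by force
qed

lemma sum_PiE_split:
  assumes "I \<inter> J = {}"
  shows "(\<Sum>f\<in>PiE (I \<union> J) (\<lambda>_. B). g f) = (\<Sum>y\<in>PiE I (\<lambda>_. B). \<Sum>x\<in>PiE J (\<lambda>_. B). g (pmerge I y x))"
proof -
  have "(\<Sum>f\<in>PiE (I \<union> J) (\<lambda>_. B). g f) = (\<Sum>u\<in>PiE I (\<lambda>_. B) \<times> PiE J (\<lambda>_. B). g (case u of (y, x) \<Rightarrow> pmerge I y x))"
    using sum.reindex_bij_betw[OF pmerge_bij[OF assms], of g] by simp
  also have "\<dots> = (\<Sum>y\<in>PiE I (\<lambda>_. B). \<Sum>x\<in>PiE J (\<lambda>_. B). g (pmerge I y x))"
    by (simp add: sum.cartesian_product split_def)
  finally show ?thesis .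
qed

lemma prod_merge:
  fixes y x :: "'i \<Rightarrow> 'a::comm_monoid_mult"
  assumes "I \<inter> J = {}" "finite I" "finite J"
  shows "(\<Prod>i\<in>I \<union> J. pmerge I y x i) = (\<Prod>i\<in>I. y i) * (\<Prod>i\<in>J. x i)"
proof -
  have "(\<Prod>i\<in>I \<union> J. pmerge I y x i) = (\<Prod>i\<in>I. pmerge I y x i) * (\<Prod>i\<in>J. pmerge I y x i)"
    using assms by (simp add: prod.union_disjoint)
  also have "(\<Prod>i\<in>I. pmerge I y x i) = (\<Prod>i\<in>I. y i)" by (simp add: pmerge_def)
  also have "(\<Prod>i\<in>J. pmerge I y x i) = (\<Prod>i\<in>J. x i)"
    using assms by (intro prod.cong) (auto simp: pmerge_def)
  finally show ?thesis .
qed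

lemma card_cong_pairs:
  fixes P :: "nat set" and N :: real and Nf qn D :: nat and J :: "'i set"
  assumes P: "\<And>p. p \<in> P \<Longrightarrow> prime p \<and> N / 2 \<le> real p \<and> p \<le> Nf"
    and N4: "N \<ge> 4" and NfN: "real Nf \<le> N" and Nf1: "1 \<le> Nf" and J: "finite J" and JD: "card J \<le> D" and q: "qn > 0"
  defines "X \<equiv> PiE J (\<lambda>_. P)"
  shows "card {(x, x'). x \<in> X \<and> x' \<in> X \<and> (\<Prod>i\<in>J. x i) mod qn = (\<Prod>i\<in>J. x' i) mod qn}
           \<le> card X * ((Nf ^ card J div qn + 1) * (2 * D) ^ card J)"
proof -
  define px where "px x = (\<Prod>i\<in>J. x i)" for x :: "'i \<Rightarrow> nat"
  define K where "K = (Nf ^ card J div qn + 1) * (2 * D) ^ card J"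
  have "P \<subseteq> {..Nf}" using P by auto
  then have fP: "finite P" by (rule finite_subset) simp
  have fX: "finite X" unfolding X_def using J fP by (intro finite_PiE) auto
  have pxr: "px x \<in> {1..Nf ^ card J}" if "x \<in> X" for x
  proof -
    have xi: "x i \<in> P" if "i \<in> J" for i using \<open>x \<in> X\<close> that unfolding X_def by (rule PiE_mem)
    have "1 \<le> px x" unfolding px_def
    proof (rule prod_ge_1)
      fix i assume "i \<in> J"
      then have "prime (x i)" using xi P by blast
      then show "1 \<le> x i" using prime_gt_0_nat by (simp add: Suc_le_eq)
    qed
    moreover have "px x \<le> Nf ^ card J" unfolding px_def
    proof (rule prod_le_power)
      show "\<And>i. i \<in> J \<Longrightarrow> 0 \<le> x i \<and> x i \<le> Nf" using xi P by auto
      show "1 \<le> Nf" by (rule Nf1)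
    qed simp
    ultimately show ?thesis by simp
  qed
  have fib: "card {x'\<in>X. px x' mod qn = c} \<le> K" for c
  proof -
    define V where "V = {v\<in>{1..Nf ^ card J}. v mod qn = c}"
    have fV: "finite V" unfolding V_def by simp
    have "{x'\<in>X. px x' mod qn = c} \<subseteq> (\<Union>v\<in>V. {t\<in>X. px t dvd v})"
    proof
      fix x' assume "x' \<in> {x'\<in>X. px x' mod qn = c}"
      then have "x' \<in> X" "px x' mod qn = c" by auto
      then have "px x' \<in> V" using pxr[OF \<open>x' \<in> X\<close>] unfolding V_def by simp
      show "x' \<in> (\<Union>v\<in>V. {t\<in>X. px t dvd v})"
      proof (rule UN_I[of "px x'"])
        show "px x' \<in> V" by fact
        show "x' \<in> {t\<in>X. px t dvd px x'}" using \<open>x' \<in> X\<close> by simp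
      qed
    qed
    then have "card {x'\<in>X. px x' mod qn = c} \<le> card (\<Union>v\<in>V. {t\<in>X. px t dvd v})"
      using fV fX by (intro card_mono) auto
    also have "\<dots> \<le> (\<Sum>v\<in>V. card {t\<in>X. px t dvd v})" by (rule card_UN_le[OF fV])
    also have "\<dots> \<le> (\<Sum>v\<in>V. (2 * D) ^ card J)"
    proof (rule sum_mono)
      fix v assume "v \<in> V"
      then have v1: "v > 0" and v2: "v \<le> Nf ^ card J" unfolding V_def by auto
      have "real v \<le> real Nf ^ card J" using v2 by (metis of_nat_le_iff of_nat_power)
      also have "\<dots> \<le> N ^ card J" using NfN by (intro power_mono) auto
      also have "\<dots> \<le> N ^ D" using N4 JD by (intro power_increasing) auto
      finally have vN: "real v \<le> N ^ D" .
      have "card {t \<in> PiE J (\<lambda>_. P). (\<Prod>i\<in>J. t i) dvd v} \<le> (2 * D) ^ card J"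
        by (rule card_dvd_tuples[OF _ N4 v1 vN J]) (use P in blast)
      then show "card {t\<in>X. px t dvd v} \<le> (2 * D) ^ card J" unfolding X_def px_def .
    qed
    also have "\<dots> = card V * (2 * D) ^ card J" by simp
    also have "\<dots> \<le> K" unfolding K_def
      using card_residue_le[OF q, of "Nf ^ card J" c] unfolding V_def by (intro mult_right_mono) auto
    finally show ?thesis .
  qed
  have "{(x, x'). x \<in> X \<and> x' \<in> X \<and> (\<Prod>i\<in>J. x i) mod qn = (\<Prod>i\<in>J. x' i) mod qn}
        = (\<Union>x\<in>X. Pair x ` {x'\<in>X. px x' mod qn = px x mod qn})"
    unfolding px_def by auto
  then have "card {(x, x'). x \<in> X \<and> x' \<in> X \<and> (\<Prod>i\<in>J. x i) mod qn = (\<Prod>i\<in>J. x' i) mod qn}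
        \<le> (\<Sum>x\<in>X. card (Pair x ` {x'\<in>X. px x' mod qn = px x mod qn}))"
    using card_UN_le[OF fX] by simp
  also have "\<dots> \<le> (\<Sum>x\<in>X. K)"
  proof (rule sum_mono)
    fix x assume "x \<in> X"
    have "card (Pair x ` {x'\<in>X. px x' mod qn = px x mod qn}) \<le> card {x'\<in>X. px x' mod qn = px x mod qn}"
      by (rule card_image_le) (use fX in simp)
    also have "\<dots> \<le> K" by (rule fib)
    finally show "card (Pair x ` {x'\<in>X. px x' mod qn = px x mod qn}) \<le> K" .
  qed
  also have "\<dots> = card X * K" by simp
  finally show ?thesis unfolding K_def .
qed




definition Tsum :: "int \<Rightarrow> int \<Rightarrow> ('i \<Rightarrow> nat) set \<Rightarrow> 'i set \<Rightarrow> nat \<Rightarrow> complex" where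
  "Tsum a q X J m = (\<Sum>x\<in>X. e (real_of_int (int m * int (\<Prod>i\<in>J. x i) * a) / real_of_int q))"

lemma Tsum_periodic:
  fixes qn :: nat
  assumes "qn > 0"
  shows "Tsum a (int qn) X J (m + qn) = Tsum a (int qn) X J m"
  unfolding Tsum_def
proof (intro sum.cong refl)
  fix x
  define u where "u = int (\<Prod>i\<in>J. x i)"
  have "real_of_int (int (m + qn) * u * a) / real_of_int (int qn)
        = real_of_int (int m * u * a) / real_of_int (int qn) + of_int (u * a)"
    using assms by (simp add: field_simps)
  then have "e (real_of_int (int (m + qn) * u * a) / real_of_int (int qn)) = e (real_of_int (int m * u * a) / real_of_int (int qn))"
    by (simp only: e_add_int)
  then show "e (real_of_int (int (m + qn) * int (\<Prod>i\<in>J. x i) * a) / real_of_int (int qn)) =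
         e (real_of_int (int m * int (\<Prod>i\<in>J. x i) * a) / real_of_int (int qn))"
    unfolding u_def .
qed

lemma Tsum_sq:
  fixes qn :: nat and X :: "('i \<Rightarrow> nat) set" and J :: "'i set"
  assumes q: "qn > 0" and cop: "coprime a (int qn)" and fX: "finite X"
  shows "(\<Sum>m<qn. (norm (Tsum a (int qn) X J m))^2)
         = real qn * real (card {(x, x'). x \<in> X \<and> x' \<in> X \<and> (\<Prod>i\<in>J. x i) mod qn = (\<Prod>i\<in>J. x' i) mod qn})"
proof -
  define px where "px x = (\<Prod>i\<in>J. x i)" for x :: "'i \<Rightarrow> nat"
  define th where "th m x = real_of_int (int m * int (px x) * a) / real_of_int (int qn)" for m :: nat and x
  define d where "d x x' = (int (px x) - int (px x')) * a" for x x'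
  define R where "R = {(x, x'). x \<in> X \<and> x' \<in> X \<and> px x mod qn = px x' mod qn}"
  have Tdef: "Tsum a (int qn) X J m = (\<Sum>x\<in>X. e (th m x))" for m
    unfolding Tsum_def th_def px_def ..
  have thd: "th m x - th m x' = real m * real_of_int (d x x') / real qn" for m x x'
    unfolding th_def d_def using q by (simp add: field_simps)
  have dv: "int qn dvd d x x' \<longleftrightarrow> px x mod qn = px x' mod qn" for x x'
  proof -
    have "int qn dvd d x x' \<longleftrightarrow> int qn dvd (int (px x) - int (px x'))"
      unfolding d_def using cop by (simp add: coprime_dvd_mult_left_iff coprime_commute)
    also have "\<dots> \<longleftrightarrow> int (px x) mod int qn = int (px x') mod int qn"
      by (simp add: mod_eq_dvd_iff)
    also have "\<dots> \<longleftrightarrow> px x mod qn = px x' mod qn"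
      by (metis of_nat_eq_iff zmod_int)
    finally show ?thesis .
  qed
  have "complex_of_real (\<Sum>m<qn. (norm (Tsum a (int qn) X J m))^2)
        = (\<Sum>m<qn. Tsum a (int qn) X J m * cnj (Tsum a (int qn) X J m))"
    by (simp only: of_real_sum complex_norm_square)
  also have "\<dots> = (\<Sum>m<qn. \<Sum>x\<in>X. \<Sum>x'\<in>X. e (real m * real_of_int (d x x') / real qn))"
  proof (intro sum.cong refl)
    fix m
    have "Tsum a (int qn) X J m * cnj (Tsum a (int qn) X J m) = (\<Sum>x\<in>X. \<Sum>x'\<in>X. e (th m x) * cnj (e (th m x')))"
      unfolding Tdef by (simp add: sum_product)
    also have "\<dots> = (\<Sum>x\<in>X. \<Sum>x'\<in>X. e (real m * real_of_int (d x x') / real qn))"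
      by (simp add: e_diff thd)
    finally show "Tsum a (int qn) X J m * cnj (Tsum a (int qn) X J m) = (\<Sum>x\<in>X. \<Sum>x'\<in>X. e (real m * real_of_int (d x x') / real qn))" .
  qed
  also have "\<dots> = (\<Sum>x\<in>X. \<Sum>x'\<in>X. \<Sum>m<qn. e (real m * real_of_int (d x x') / real qn))"
    by (simp add: sum.swap[of _ "{..<qn}"])
  also have "\<dots> = (\<Sum>x\<in>X. \<Sum>x'\<in>X. if px x mod qn = px x' mod qn then of_nat qn else 0)"
    by (simp add: geom_e[OF q] dv)
  also have "\<dots> = (\<Sum>z\<in>X \<times> X. if px (fst z) mod qn = px (snd z) mod qn then of_nat qn else 0)"
    by (simp add: sum.cartesian_product split_def)
  also have "\<dots> = (\<Sum>z\<in>R. of_nat qn)"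
  proof -
    have "R = {z \<in> X \<times> X. px (fst z) mod qn = px (snd z) mod qn}" unfolding R_def by auto
    then show ?thesis
      using sum.inter_filter[of "X \<times> X" "\<lambda>_. of_nat qn :: complex" "\<lambda>z. px (fst z) mod qn = px (snd z) mod qn"] fX
      by simp
  qed
  also have "\<dots> = complex_of_real (real qn * real (card R))" by simp
  finally show ?thesis unfolding R_def px_def by (simp only: of_real_eq_iff)
qed




lemma P_facts:
  fixes N :: real and q :: int
  assumes N4: "N \<ge> 4"
  defines "P \<equiv> {p::nat. prime p \<and> N / 2 \<le> real p \<and> real p \<le> N \<and> \<not> int p dvd q}"
  shows "\<And>p. p \<in> P \<Longrightarrow> prime p \<and> N / 2 \<le> real p \<and> p \<le> nat \<lfloor>N\<rfloor>"
    and "finite P" and "card P \<le> nat \<lfloor>N\<rfloor>" and "real (nat \<lfloor>N\<rfloor>) \<le> N" and "1 \<le> nat \<lfloor>N\<rfloor>"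
proof -
  show Pp: "\<And>p. p \<in> P \<Longrightarrow> prime p \<and> N / 2 \<le> real p \<and> p \<le> nat \<lfloor>N\<rfloor>"
  proof -
    fix p assume "p \<in> P"
    then have "prime p" "N / 2 \<le> real p" "real p \<le> N" unfolding P_def by auto
    moreover have "p \<le> nat \<lfloor>N\<rfloor>" using \<open>real p \<le> N\<close> by (simp add: le_nat_iff le_floor_iff)
    ultimately show "prime p \<and> N / 2 \<le> real p \<and> p \<le> nat \<lfloor>N\<rfloor>" by simp
  qed
  have sub: "P \<subseteq> {1..nat \<lfloor>N\<rfloor>}"
  proof
    fix p assume "p \<in> P"
    then have "prime p" "p \<le> nat \<lfloor>N\<rfloor>" using Pp by auto
    then show "p \<in> {1..nat \<lfloor>N\<rfloor>}" using prime_gt_0_nat[of p] by simp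
  qed
  show "finite P" using sub by (rule finite_subset) simp
  show "card P \<le> nat \<lfloor>N\<rfloor>" using card_mono[OF _ sub] by simp
  show "real (nat \<lfloor>N\<rfloor>) \<le> N" using N4 by linarith
  show "1 \<le> nat \<lfloor>N\<rfloor>" using N4 by linarith
qed

lemma trivial_bound:
  fixes N :: real and P :: "nat set"
  assumes fP: "finite P" and cP: "real (card P) \<le> N"
  shows "(\<Sum>l = 1..L. norm (\<Sum>qs \<in> PiE {..<n} (\<lambda>_. P). e (f l qs))) \<le> real L * N ^ n"
proof -
  have "norm (\<Sum>qs \<in> PiE {..<n} (\<lambda>_. P). e (f l qs)) \<le> N ^ n" for l
  proof -
    have "norm (\<Sum>qs \<in> PiE {..<n} (\<lambda>_. P). e (f l qs)) \<le> (\<Sum>qs \<in> PiE {..<n} (\<lambda>_. P). norm (e (f l qs)))"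
      by (rule norm_sum)
    also have "\<dots> = real (card (PiE {..<n} (\<lambda>_. P)))" by (simp add: norm_e)
    also have "\<dots> = real (card P) ^ n" by (simp add: card_PiE)
    also have "\<dots> \<le> N ^ n" using cP by (intro power_mono) auto
    finally show ?thesis .
  qed
  then have "(\<Sum>l = 1..L. norm (\<Sum>qs \<in> PiE {..<n} (\<lambda>_. P). e (f l qs))) \<le> (\<Sum>l = 1..L. N ^ n)"
    by (intro sum_mono)
  also have "\<dots> = real L * N ^ n" by simp
  finally show ?thesis .
qed

lemma main_case:
  fixes a q :: int and n k L :: nat and N :: real
  assumes q1: "q \<ge> 1" and g: "gcd a q = 1" and k0: "k > 0" and kn: "k < n" and L0: "L > 0"
    and N4: "N \<ge> 4" and LN: "real L \<le> N ^ n" and qLN: "real_of_int q \<le> real L * N ^ k"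
  defines "P \<equiv> {p::nat. prime p \<and> N / 2 \<le> real p \<and> real p \<le> N \<and> \<not> int p dvd q}"
  shows "(\<Sum>l = 1..L. norm (\<Sum>qs \<in> PiE {..<n} (\<lambda>_. P).
           e (real_of_int (int l * (\<Prod>i<n. int (qs i)) * a) / real_of_int q)))^2
       \<le> (2 * (2 * real (n + k)) ^ n) * (real L * N ^ k) * (real L * N ^ k) * (N ^ (n - k) * (N ^ (n - k) / real_of_int q + 1))"
proof -
  define Nf where "Nf = nat \<lfloor>N\<rfloor>"
  have Pp: "\<And>p. p \<in> P \<Longrightarrow> prime p \<and> N / 2 \<le> real p \<and> p \<le> Nf"
    and fP: "finite P" and cP: "card P \<le> Nf" and NfN: "real Nf \<le> N" and Nf1: "1 \<le> Nf"
    using P_facts[OF N4] unfolding P_def Nf_def by blast+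
  define j where "j = n - k"
  define I where "I = {..<k}"
  define J where "J = {k..<n}"
  define X where "X = PiE J (\<lambda>_. P)"
  define Y where "Y = PiE I (\<lambda>_. P)"
  define py where "py y = (\<Prod>i\<in>I. y i)" for y :: "nat \<Rightarrow> nat"
  define qn where "qn = nat q"
  define h where "h m = norm (Tsum a (int qn) X J m)" for m
  define F where "F = (2 * (n + k)) ^ k"
  define G where "G = (2 * (n + k)) ^ j"
  define M where "M = L * Nf ^ k"
  define Z where "Z = {1..L} \<times> Y"
  define f where "f z = fst z * py (snd z)" for z :: "nat \<times> (nat \<Rightarrow> nat)"
  define cnt where "cnt = card {(x, x'). x \<in> X \<and> x' \<in> X \<and> (\<Prod>i\<in>J. x i) mod qn = (\<Prod>i\<in>J. x' i) mod qn}"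
  have qnq: "int qn = q" and qn0: "qn > 0" unfolding qn_def using q1 by auto
  have cop: "coprime a (int qn)" using g qnq by (simp add: coprime_iff_gcd_eq_1)
  have IJ: "I \<inter> J = {}" "{..<n} = I \<union> J" "finite I" "finite J" "card I = k" "card J = j"
    unfolding I_def J_def j_def using kn by auto
  have fX: "finite X" "finite Y" unfolding X_def Y_def using fP IJ by (auto intro: finite_PiE)
  have cX: "card X = card P ^ j" "card Y = card P ^ k" unfolding X_def Y_def using IJ by (simp_all add: card_PiE)
  have inner: "(\<Sum>qs \<in> PiE {..<n} (\<lambda>_. P). e (real_of_int (int l * (\<Prod>i<n. int (qs i)) * a) / real_of_int q))
      = (\<Sum>y\<in>Y. Tsum a (int qn) X J (l * py y))" for l
  proof -
    have "(\<Sum>qs \<in> PiE {..<n} (\<lambda>_. P). e (real_of_int (int l * (\<Prod>i<n. int (qs i)) * a) / real_of_int q))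
       = (\<Sum>qs \<in> PiE (I \<union> J) (\<lambda>_. P). e (real_of_int (int l * (\<Prod>i\<in>I \<union> J. int (qs i)) * a) / real_of_int q))"
      using IJ(2) by simp
    also have "\<dots> = (\<Sum>y\<in>Y. \<Sum>x\<in>X. e (real_of_int (int l * (\<Prod>i\<in>I \<union> J. int (pmerge I y x i)) * a) / real_of_int q))"
      unfolding X_def Y_def by (rule sum_PiE_split[OF IJ(1)])
    also have "\<dots> = (\<Sum>y\<in>Y. Tsum a (int qn) X J (l * py y))"
      unfolding Tsum_def
    proof (intro sum.cong refl)
      fix y x
      have "(\<Prod>i\<in>I \<union> J. int (pmerge I y x i)) = int (\<Prod>i\<in>I \<union> J. pmerge I y x i)" by simp
      also have "\<dots> = int (py y) * int (\<Prod>i\<in>J. x i)"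
        unfolding py_def using prod_merge[OF IJ(1) IJ(3) IJ(4), of y x] by simp
      finally have eqn: "int l * (\<Prod>i\<in>I \<union> J. int (pmerge I y x i)) * a = int (l * py y) * int (\<Prod>i\<in>J. x i) * a"
        by simp
      show "e (real_of_int (int l * (\<Prod>i\<in>I \<union> J. int (pmerge I y x i)) * a) / real_of_int q) =
         e (real_of_int (int (l * py y) * int (\<Prod>i\<in>J. x i) * a) / real_of_int (int qn))"
        by (simp only: eqn qnq)
    qed
    finally show ?thesis .
  qed
  define A where "A = (\<Sum>l = 1..L. norm (\<Sum>qs \<in> PiE {..<n} (\<lambda>_. P).
           e (real_of_int (int l * (\<Prod>i<n. int (qs i)) * a) / real_of_int q)))"
  define S where "S = (\<Sum>z\<in>Z. h (f z))"
  have AS: "A \<le> S"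
  proof -
    have "A = (\<Sum>l = 1..L. norm (\<Sum>y\<in>Y. Tsum a (int qn) X J (l * py y)))"
      unfolding A_def by (simp only: inner)
    also have "\<dots> \<le> (\<Sum>l = 1..L. \<Sum>y\<in>Y. h (l * py y))"
      unfolding h_def by (intro sum_mono norm_sum)
    also have "\<dots> = S"
      unfolding S_def Z_def f_def by (simp add: sum.cartesian_product split_def)
    finally show ?thesis .
  qed
  have pyr: "py y \<in> {1..Nf ^ k}" if "y \<in> Y" for y
  proof -
    have yi: "y i \<in> P" if "i \<in> I" for i using \<open>y \<in> Y\<close> that unfolding Y_def by (rule PiE_mem)
    have "1 \<le> py y" unfolding py_def
    proof (rule prod_ge_1)
      fix i assume "i \<in> I"
      then have "prime (y i)" using yi Pp by blast
      then show "1 \<le> y i" using prime_gt_0_nat by (simp add: Suc_le_eq)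
    qed
    moreover have "py y \<le> Nf ^ k" unfolding py_def
    proof (rule prod_le_power)
      show "\<And>i. i \<in> I \<Longrightarrow> 0 \<le> y i \<and> y i \<le> Nf" using yi Pp by auto
      show "1 \<le> Nf" by (rule Nf1)
    qed (simp add: IJ)
    ultimately show ?thesis by simp
  qed
  have MN: "real M \<le> real L * N ^ k"
  proof -
    have "real (Nf ^ k) \<le> N ^ k" using NfN by (simp add: power_mono)
    then show ?thesis unfolding M_def using L0 by (simp add: mult_left_mono)
  qed
  define W where "W = (\<Sum>z\<in>Z. (h (f z))^2)"
  have fZ: "finite Z" unfolding Z_def using fX by simp
  have S2: "S^2 \<le> W * real (card Z)"
    unfolding S_def W_def by (rule sum_squared_le_sum_of_squares)
  have cZ: "card Z = L * card Y" unfolding Z_def using fX by (simp add: card_cartesian_product)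
  have WF: "W \<le> real F * (\<Sum>m\<in>{1..M}. (h m)^2)"
    unfolding W_def
  proof (rule sum_fiber_le[OF fZ])
    show "finite {1..M}" by simp
    show "f ` Z \<subseteq> {1..M}"
    proof
      fix m assume "m \<in> f ` Z"
      then obtain l y where ly: "l \<in> {1..L}" "y \<in> Y" "m = l * py y" unfolding Z_def f_def by auto
      have "1 \<le> l * py y" using ly pyr[OF ly(2)] by simp
      moreover have "l * py y \<le> M" unfolding M_def using ly pyr[OF ly(2)] by (intro mult_le_mono) auto
      ultimately show "m \<in> {1..M}" using ly by simp
    qed
    show "\<And>m. 0 \<le> (h m)^2" by simp
    fix m assume m: "m \<in> {1..M}"
    have inj: "inj_on snd {z\<in>Z. f z = m}"
    proof (rule inj_onI)
      fix z z' assume z: "z \<in> {z\<in>Z. f z = m}" and z': "z' \<in> {z\<in>Z. f z = m}" and s: "snd z = snd z'"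
      have "snd z \<in> Y" using z unfolding Z_def by auto
      then have p0: "py (snd z) > 0" using pyr by fastforce
      have "fst z * py (snd z) = fst z' * py (snd z)" using z z' s unfolding f_def by simp
      then have "fst z = fst z'" using p0 by simp
      then show "z = z'" using s by (simp add: prod_eq_iff)
    qed
    have sub: "snd ` {z\<in>Z. f z = m} \<subseteq> {y \<in> PiE I (\<lambda>_. P). (\<Prod>i\<in>I. y i) dvd m}"
    proof
      fix y assume "y \<in> snd ` {z\<in>Z. f z = m}"
      then obtain l where "l \<in> {1..L}" "y \<in> Y" "l * py y = m" unfolding Z_def f_def by auto
      then show "y \<in> {y \<in> PiE I (\<lambda>_. P). (\<Prod>i\<in>I. y i) dvd m}"
        unfolding Y_def py_def by (auto intro: dvdI[of _ _ l] simp: mult.commute)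
    qed
    have mN: "real m \<le> N ^ (n + k)"
    proof -
      have "real m \<le> real M" using m by simp
      also have "\<dots> \<le> real L * N ^ k" by (rule MN)
      also have "\<dots> \<le> N ^ n * N ^ k" using LN N4 by (intro mult_right_mono) auto
      finally show ?thesis by (simp add: power_add)
    qed
    have "card {z\<in>Z. f z = m} = card (snd ` {z\<in>Z. f z = m})" using inj by (simp add: card_image)
    also have "\<dots> \<le> card {y \<in> PiE I (\<lambda>_. P). (\<Prod>i\<in>I. y i) dvd m}"
      using sub fX unfolding Y_def by (intro card_mono) (auto intro: finite_subset[of _ "PiE I (\<lambda>_. P)"])
    also have "\<dots> \<le> (2 * (n + k)) ^ card I"
      by (rule card_dvd_tuples[OF _ N4 _ mN IJ(3)]) (use Pp m in auto)
    finally show "card {z\<in>Z. f z = m} \<le> F" unfolding F_def using IJ by simp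
  qed
  have per: "(\<Sum>m\<in>{1..M}. (h m)^2) \<le> real (M div qn + 1) * (\<Sum>m<qn. (h m)^2)"
  proof (rule periodic_sum_le[OF _ _ qn0])
    show "\<And>m. (h (m + qn))^2 = (h m)^2" unfolding h_def by (simp only: Tsum_periodic[OF qn0])
  qed simp
  have sq: "(\<Sum>m<qn. (h m)^2) = real qn * real cnt"
    unfolding h_def cnt_def by (rule Tsum_sq[OF qn0 cop fX(1)])
  have cnt: "cnt \<le> card X * ((Nf ^ card J div qn + 1) * (2 * (n + k)) ^ card J)"
  proof -
    have cJ: "card J \<le> n + k" using IJ(6) unfolding j_def by simp
    show ?thesis unfolding cnt_def X_def by (rule card_cong_pairs[OF Pp N4 NfN Nf1 IJ(4) cJ qn0])
  qed
  define V where "V = (\<Sum>m\<in>{1..M}. (h m)^2)"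
  define V0 where "V0 = (\<Sum>m<qn. (h m)^2)"
  define Kj where "Kj = Nf ^ card J div qn + 1"
  have A0: "0 \<le> A" unfolding A_def by (intro sum_nonneg) simp
  have V0: "0 \<le> V0" "0 \<le> V" unfolding V0_def V_def by (auto intro: sum_nonneg)
  have W0: "0 \<le> W" unfolding W_def by (auto intro: sum_nonneg)
  have rq: "real qn = real_of_int q" using qnq by (metis of_int_of_nat_eq)
  have R1: "real (M div qn + 1) * real qn \<le> 2 * (real L * N ^ k)"
  proof -
    have "(M div qn + 1) * qn \<le> M + qn" by (simp add: add_mult_distrib)
    then have "real ((M div qn + 1) * qn) \<le> real M + real qn" by linarith
    moreover have "real qn = real_of_int q" using qnq by (metis of_int_of_nat_eq)
    ultimately show ?thesis using MN qLN unfolding of_nat_mult by linarith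
  qed
  have R2: "real (card X) * real Kj \<le> N ^ j * (N ^ j / real_of_int q + 1)"
  proof -
    have qpos: "real_of_int q > 0" using q1 by simp
    have "real (card X) \<le> real Nf ^ j" using cX cP by (simp add: power_mono)
    also have "\<dots> \<le> N ^ j" using NfN by (simp add: power_mono)
    finally have c1: "real (card X) \<le> N ^ j" .
    have "real (Nf ^ card J div qn) \<le> real (Nf ^ card J) / real qn" by (rule of_nat_div_le_of_nat)
    also have "\<dots> \<le> N ^ j / real qn"
    proof (rule divide_right_mono)
      show "real (Nf ^ card J) \<le> N ^ j" using IJ(6) NfN by (simp add: power_mono)
    qed simp
    finally have "real (Nf ^ card J div qn) \<le> N ^ j / real_of_int q" unfolding rq .
    then have "real Kj \<le> N ^ j / real_of_int q + 1" unfolding Kj_def by simp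
    then show ?thesis using c1 by (intro mult_mono) auto
  qed
  have cY: "real L * real (card Y) \<le> real L * N ^ k"
  proof -
    have "real (card Y) \<le> real Nf ^ k" using cX cP by (simp add: power_mono)
    also have "\<dots> \<le> N ^ k" using NfN by (simp add: power_mono)
    finally show ?thesis by (simp add: mult_left_mono)
  qed
  have FG: "real F * real G = (2 * real (n + k)) ^ n"
  proof -
    have "F * G = (2 * (n + k)) ^ n" unfolding F_def G_def j_def using kn by (simp add: power_add[symmetric])
    then have "real (F * G) = real ((2 * (n + k)) ^ n)" by simp
    then show ?thesis by simp
  qed
  have "A^2 \<le> S^2" using A0 AS by (intro power_mono) auto
  also have "\<dots> \<le> W * real (card Z)" by (rule S2)
  also have "\<dots> \<le> (real F * V) * real (card Z)" using WF unfolding V_def by (intro mult_right_mono) auto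
  also have "\<dots> \<le> (real F * (real (M div qn + 1) * V0)) * real (card Z)"
    using per unfolding V_def V0_def by (intro mult_right_mono mult_left_mono) auto
  also have "\<dots> = (real F * (real (M div qn + 1) * (real qn * real cnt))) * real (card Z)"
    unfolding V0_def sq ..
  also have "\<dots> \<le> (real F * (real (M div qn + 1) * (real qn * (real (card X) * (real Kj * real G))))) * real (card Z)"
  proof -
    have "cnt \<le> card X * (Kj * G)" using cnt IJ(6) unfolding Kj_def G_def by simp
    then have "real cnt \<le> real (card X * (Kj * G))" by (simp only: of_nat_le_iff)
    then have "real cnt \<le> real (card X) * (real Kj * real G)" by (simp only: of_nat_mult)
    then show ?thesis by (intro mult_right_mono mult_left_mono) auto
  qed
  also have "\<dots> = (real F * real G) * (real L * real (card Y)) * (real (M div qn + 1) * real qn) * (real (card X) * real Kj)"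
    unfolding cZ by (simp add: algebra_simps)
  also have "\<dots> \<le> (real F * real G) * (real L * N ^ k) * (2 * (real L * N ^ k)) * (N ^ j * (N ^ j / real_of_int q + 1))"
  proof -
    have Nk: "0 \<le> real L * N ^ k" using N4 by simp
    have e1: "(real F * real G) * (real L * real (card Y)) \<le> (real F * real G) * (real L * N ^ k)"
      by (rule mult_left_mono[OF cY]) simp
    have e2: "(real F * real G) * (real L * real (card Y)) * (real (M div qn + 1) * real qn)
            \<le> (real F * real G) * (real L * N ^ k) * (2 * (real L * N ^ k))"
      by (rule mult_mono[OF e1 R1]) (use Nk in simp_all)
    show ?thesis
      by (rule mult_mono[OF e2 R2]) (use Nk in simp_all)
  qed
  finally have "A^2 \<le> (2 * (2 * real (n + k)) ^ n) * (real L * N ^ k) * (real L * N ^ k) * (N ^ (n - k) * (N ^ (n - k) / real_of_int q + 1))"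
    unfolding FG j_def by (simp add: algebra_simps)
  then show ?thesis unfolding A_def .
qed

theorem lemma1:
  "\<exists>C>0. \<forall>(a::int) (q::int) (n::nat) (k::nat) (L::nat) (N::real).
     q \<ge> 1 \<longrightarrow> gcd a q = 1 \<longrightarrow> n > 0 \<longrightarrow> k > 0 \<longrightarrow> L > 0 \<longrightarrow> N \<ge> 1 \<longrightarrow>
     real L \<le> N ^ n \<longrightarrow> real_of_int q \<le> real L * N ^ k \<longrightarrow> 2 ^ (n + k + 1) < N \<longrightarrow>
     (let P = {p::nat. prime p \<and> N / 2 \<le> real p \<and> real p \<le> N \<and> \<not> int p dvd q} in
       (\<Sum>l = 1..L. norm (\<Sum>qs \<in> PiE {..<n} (\<lambda>_. P).
           e (real_of_int (int l * (\<Prod>i<n. int (qs i)) * a) / real_of_int q)))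
       \<le> C * 2 ^ (n + k) * real n ^ n *
           max (real L * N powr (real n / 2 + real k / 2)) (real L * N ^ n / sqrt (real_of_int q)))"
proof (rule exI[of _ "2::real"], intro conjI allI impI)
  show "(2::real) > 0" by simp
  fix a q :: int and n k L :: nat and N :: real
  assume q1: "q \<ge> 1" and g: "gcd a q = 1" and n0: "n > 0" and k0: "k > 0" and L0: "L > 0"
    and N1: "N \<ge> 1" and LN: "real L \<le> N ^ n" and qLN: "real_of_int q \<le> real L * N ^ k"
    and N2: "2 ^ (n + k + 1) < N"
  define P where "P = {p::nat. prime p \<and> N / 2 \<le> real p \<and> real p \<le> N \<and> \<not> int p dvd q}"
  define A where "A = (\<Sum>l = 1..L. norm (\<Sum>qs \<in> PiE {..<n} (\<lambda>_. P).
           e (real_of_int (int l * (\<Prod>i<n. int (qs i)) * a) / real_of_int q)))"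
  define B where "B = max (real L * N powr (real n / 2 + real k / 2)) (real L * N ^ n / sqrt (real_of_int q))"
  define c where "c = 2 * (2::real) ^ (n + k) * real n ^ n"
  have N4: "N \<ge> 4"
  proof -
    have "(2::real) ^ 2 \<le> 2 ^ (n + k + 1)" using n0 by (intro power_increasing) auto
    then show ?thesis using N2 by simp
  qed
  have Npos: "N > 0" using N4 by simp
  have A0: "0 \<le> A" unfolding A_def by (intro sum_nonneg) simp
  have B1: "real L * N powr (real n / 2 + real k / 2) \<le> B" unfolding B_def by simp
  have B2: "real L * N ^ n / sqrt (real_of_int q) \<le> B" unfolding B_def by simp
  have "0 \<le> real L * N powr (real n / 2 + real k / 2)" by simp
  then have B0: "0 \<le> B" using B1 by linarith
  have nn1: "1 \<le> real n ^ n" using n0 by (simp add: one_le_power)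
  have c1: "1 \<le> c"
  proof -
    have "(1::real) \<le> 2 ^ (n + k)" by simp
    then have "1 * 1 \<le> (2::real) ^ (n + k) * real n ^ n" using nn1 by (intro mult_mono) auto
    moreover have "c = 2 * ((2::real)^(n+k) * real n ^ n)" unfolding c_def by (rule mult.assoc)
    ultimately show ?thesis by linarith
  qed
  have "A \<le> c * B"
  proof (cases "k < n")
    case False
    obtain Pp: "\<And>p. p \<in> P \<Longrightarrow> prime p \<and> N / 2 \<le> real p \<and> p \<le> nat \<lfloor>N\<rfloor>"
      and fP: "finite P" and cP: "card P \<le> nat \<lfloor>N\<rfloor>" and NfN: "real (nat \<lfloor>N\<rfloor>) \<le> N"
      using P_facts[OF N4] unfolding P_def by blast
    have cPN: "real (card P) \<le> N" using cP NfN by linarith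
    have "A \<le> real L * N ^ n"
      unfolding A_def
      by (rule trivial_bound[OF fP cPN, where f = "\<lambda>l qs. real_of_int (int l * (\<Prod>i<n. int (qs i)) * a) / real_of_int q"])
    also have "\<dots> \<le> real L * N powr (real n / 2 + real k / 2)"
    proof (rule mult_left_mono)
      have "N ^ n = N powr real n" using Npos by (simp add: powr_realpow)
      also have "\<dots> \<le> N powr (real n / 2 + real k / 2)"
        using False N1 by (intro powr_mono) auto
      finally show "N ^ n \<le> N powr (real n / 2 + real k / 2)" .
    qed simp
    also have "\<dots> \<le> B" by (rule B1)
    also have "\<dots> \<le> c * B" using c1 B0 by (simp add: mult_le_cancel_right1)
    finally show ?thesis .
  next
    case True
    define u where "u = N ^ k"
    define w where "w = N ^ (n - k)"
    define Lu where "Lu = real L * u"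
    have qpos: "real_of_int q > 0" using q1 by simp
    have Nn: "N ^ n = u * w" unfolding u_def w_def using True by (simp add: power_add[symmetric])
    have Nnk: "N ^ (n + k) = u * u * w" unfolding u_def w_def using True
      by (simp add: power_add[symmetric] add.commute)
    have u0: "u \<ge> 0" "w \<ge> 0" unfolding u_def w_def using Npos by auto
    have main: "A^2 \<le> (2 * (2 * real (n + k)) ^ n) * Lu * Lu * (w * (w / real_of_int q + 1))"
      unfolding A_def Lu_def u_def w_def P_def
      by (rule main_case[OF q1 g k0 True L0 N4 LN qLN])
    have b1: "Lu^2 * w \<le> B^2"
    proof -
      have "(N powr (real n / 2 + real k / 2))^2 = N powr (real n / 2 + real k / 2) * N powr (real n / 2 + real k / 2)"
        by (simp add: power2_eq_square)
      also have "\<dots> = N powr real (n + k)" by (simp add: powr_add[symmetric])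
      also have "\<dots> = N ^ (n + k)" using Npos by (rule powr_realpow)
      finally have "(real L * N powr (real n / 2 + real k / 2))^2 = Lu^2 * w"
        unfolding Lu_def Nnk by (simp add: power_mult_distrib power2_eq_square)
      moreover have "(real L * N powr (real n / 2 + real k / 2))^2 \<le> B^2"
        using B1 by (intro power_mono) auto
      ultimately show ?thesis by simp
    qed
    have b2: "Lu^2 * w^2 / real_of_int q \<le> B^2"
    proof -
      have "(real L * N ^ n / sqrt (real_of_int q))^2 = Lu^2 * w^2 / real_of_int q"
        unfolding Lu_def Nn using qpos by (simp add: power_divide power_mult_distrib)
      moreover have "(real L * N ^ n / sqrt (real_of_int q))^2 \<le> B^2"
        using B2 qpos Npos by (intro power_mono) auto
      ultimately show ?thesis by simp
    qed
    have cnk: "(2 * real (n + k)) ^ n \<le> 4 ^ (n + k) * (real n ^ n)^2"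
    proof -
      have "(2 * real (n + k)) ^ n \<le> (4 * real n) ^ n" using True by (intro power_mono) auto
      also have "\<dots> = 4 ^ n * real n ^ n" by (simp add: power_mult_distrib)
      also have "\<dots> \<le> 4 ^ (n + k) * (real n ^ n)^2"
      proof (rule mult_mono)
        show "(4::real) ^ n \<le> 4 ^ (n + k)" by (intro power_increasing) auto
        show "real n ^ n \<le> (real n ^ n)^2" using nn1 by (simp add: power2_eq_square mult_le_cancel_left1)
      qed auto
      finally show ?thesis .
    qed
    define K0 where "K0 = 2 * (2 * real (n + k)) ^ n"
    have eqR: "Lu * Lu * (w * (w / real_of_int q + 1)) = Lu^2 * w^2 / real_of_int q + Lu^2 * w"
      using qpos by (simp add: field_simps power2_eq_square)
    have "A^2 \<le> K0 * Lu * Lu * (w * (w / real_of_int q + 1))" using main unfolding K0_def .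
    also have "\<dots> = K0 * (Lu * Lu * (w * (w / real_of_int q + 1)))" by (simp only: mult.assoc)
    finally have "A^2 \<le> (2 * (2 * real (n + k)) ^ n) * (Lu^2 * w^2 / real_of_int q + Lu^2 * w)"
      unfolding eqR K0_def .
    also have "\<dots> \<le> (2 * (2 * real (n + k)) ^ n) * (B^2 + B^2)"
      by (rule mult_left_mono[OF add_mono[OF b2 b1]]) simp
    also have "\<dots> = 4 * (2 * real (n + k)) ^ n * B^2" by simp
    also have "\<dots> \<le> 4 * (4 ^ (n + k) * (real n ^ n)^2) * B^2"
      by (rule mult_right_mono[OF mult_left_mono[OF cnk]]) simp_all
    also have "\<dots> = (c * B)^2"
    proof -
      have four: "(4::real)^(n+k) = 2^(n+k)*2^(n+k)" using power_mult_distrib[of "2::real" 2 "n+k"] by simp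
      show ?thesis unfolding c_def four power2_eq_square by (simp add: mult_ac)
    qed
    finally have "A^2 \<le> (c * B)^2" .
    moreover have "0 \<le> c * B" using B0 c1 by simp
    ultimately show ?thesis by (rule power2_le_imp_le)
  qed
  then show "let P = {p::nat. prime p \<and> N / 2 \<le> real p \<and> real p \<le> N \<and> \<not> int p dvd q} in
       (\<Sum>l = 1..L. norm (\<Sum>qs \<in> PiE {..<n} (\<lambda>_. P).
           e (real_of_int (int l * (\<Prod>i<n. int (qs i)) * a) / real_of_int q)))
       \<le> 2 * 2 ^ (n + k) * real n ^ n *
           max (real L * N powr (real n / 2 + real k / 2)) (real L * N ^ n / sqrt (real_of_int q))"
    unfolding Let_def A_def B_def c_def P_def .
qed


end
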